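(* Suppose $\nabla f$ is Lipschitz continuous on $\mathbb{R}^n$ with modulus $L$, $f$ is twice continuously differentiable, and let $x^*\in\mathbb{R}^n$ and $\Lambda_*\in\mathbb S^n_{++}$ with $\lambda_MI\succeq\Lambda_*\succeq\lambda_mI$, $\lambda_m>0$, be such that every $M\in\mathcal M^{\Lambda_*}(x^* )$ is nonsingular with $\|M^{-1}\|\le C$ for some $C>0$. Then for all $\beta_c\in(0,1)$ and $\gamma_c\in(0,\beta_c/C)$ there exists $\varepsilon_c>0$, independent of the sample batches, such that for any sample batches $s,t$ and any $x$ satisfying $$x\in B_{\varepsilon_c}(x^* ),\qquad\|\nabla f(x)-G_s(x)\|\le\varepsilon_c,\qquad\|\nabla^2f(x)-H_t(x)\|\le0.5\lambda_m\gamma_c,$$ every $M\in\mathcal M^{\Lambda_*}_{s,t}(x)$ is invertible with $\|M^{-1}\|\le C/(1-\beta_c)$.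
   Context: $r:\mathbb{R}^n\to(-\infty,+\infty]$ convex, lsc, proper; $\mathrm{prox}^\Lambda_r(x):=\arg\min_y r(y)+\frac12\langle x-y,\Lambda(x-y)\rangle$; $\partial$ denotes the Clarke generalized Jacobian. $u^\Lambda(x):=x-\Lambda^{-1}\nabla f(x)$, $\mathcal M^\Lambda(x):=\{(I-D)+D\Lambda^{-1}\nabla^2f(x):D\in\partial\mathrm{prox}^\Lambda_r(u^\Lambda(x))\}$. Sample batches $s,t$ yield a stochastic gradient $G_s(x)\in\mathbb{R}^n$ and a stochastic Hessian $H_t(x)\in\mathbb S^n$; $u^\Lambda_s(x):=x-\Lambda^{-1}G_s(x)$ and $\mathcal M^\Lambda_{s,t}(x):=\{(I-D)+D\Lambda^{-1}H_t(x):D\in\partial\mathrm{prox}^\Lambda_r(u^\Lambda_s(x))\}$. Matrix norms are spectral norms; $B_\varepsilon(x^* )$ is the open Euclidean ball. *)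

theory Defs
  imports "HOL-Analysis.Analysis"
begin

definition ext_convex :: "('a::real_vector \<Rightarrow> ereal) \<Rightarrow> bool" where
  "ext_convex r \<longleftrightarrow> (\<forall>x y t. 0 \<le> t \<and> t \<le> 1 \<longrightarrow>
      r ((1 - t) *\<^sub>R x + t *\<^sub>R y) \<le> ereal (1 - t) * r x + ereal t * r y)"

definition lsc :: "('a::topological_space \<Rightarrow> ereal) \<Rightarrow> bool" where
  "lsc r \<longleftrightarrow> (\<forall>x. r x \<le> Liminf (at x) r)"

definition proper_fun :: "('a \<Rightarrow> ereal) \<Rightarrow> bool" where
  "proper_fun r \<longleftrightarrow> (\<forall>x. r x \<noteq> -\<infinity>) \<and> (\<exists>x. r x \<noteq> \<infinity>)"

definition sym_mat :: "real^'n^'n \<Rightarrow> bool" where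
  "sym_mat A \<longleftrightarrow> transpose A = A"

definition loewner_le :: "real^'n^'n \<Rightarrow> real^'n^'n \<Rightarrow> bool" where
  "loewner_le A B \<longleftrightarrow> (\<forall>v. v \<bullet> ((B - A) *v v) \<ge> 0)"

definition pos_def :: "real^'n^'n \<Rightarrow> bool" where
  "pos_def A \<longleftrightarrow> sym_mat A \<and> (\<forall>v. v \<noteq> 0 \<longrightarrow> v \<bullet> (A *v v) > 0)"

definition mnorm :: "real^'n^'n \<Rightarrow> real" where
  "mnorm A = onorm (\<lambda>v. A *v v)"

definition prox :: "real^'n^'n \<Rightarrow> (real^'n \<Rightarrow> ereal) \<Rightarrow> real^'n \<Rightarrow> real^'n" where
  "prox \<Lambda> r x = (THE y. \<forall>z.
      r y + ereal ((1/2) * ((x - y) \<bullet> (\<Lambda> *v (x - y))))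
        \<le> r z + ereal ((1/2) * ((x - z) \<bullet> (\<Lambda> *v (x - z)))))"

definition bouligand_jac :: "(real^'n \<Rightarrow> real^'n) \<Rightarrow> real^'n \<Rightarrow> (real^'n^'n) set" where
  "bouligand_jac F u = {M. \<exists>xs :: nat \<Rightarrow> real^'n.
      xs \<longlonglongrightarrow> u \<and> (\<forall>k. F differentiable (at (xs k))) \<and>
      (\<lambda>k. jacobian F (at (xs k))) \<longlonglongrightarrow> M}"

definition clarke_jac :: "(real^'n \<Rightarrow> real^'n) \<Rightarrow> real^'n \<Rightarrow> (real^'n^'n) set" where
  "clarke_jac F u = convex hull (bouligand_jac F u)"

text \<open>u^\<Lambda>(x) with a given (exact or stochastic) gradient value g, and the set
  {(I - D) + D \<Lambda>^{-1} H : D \<in> \<partial>prox^\<Lambda>_r(x - \<Lambda>^{-1} g)}.\<close>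

definition Mset :: "real^'n^'n \<Rightarrow> (real^'n \<Rightarrow> ereal) \<Rightarrow> real^'n \<Rightarrow> real^'n \<Rightarrow> real^'n^'n
     \<Rightarrow> (real^'n^'n) set" where
  "Mset \<Lambda> r x g H = {(mat 1 - D) + D ** matrix_inv \<Lambda> ** H | D.
      D \<in> clarke_jac (prox \<Lambda> r) (x - matrix_inv \<Lambda> *v g)}"

end

theory Submission imports Defs begin

lemma sym_inner:
  fixes A :: "real^'n^'n"
  assumes "transpose A = A"
  shows "x \<bullet> (A *v y) = y \<bullet> (A *v x)"
  by (metis assms dot_lmul_matrix inner_commute vector_transpose_matrix)

lemma quad_expand:
  fixes A :: "real^'n^'n"
  assumes "transpose A = A"
  shows "(x - t *\<^sub>R y) \<bullet> (A *v (x - t *\<^sub>R y)) =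
     x \<bullet> (A *v x) - 2 * t * (y \<bullet> (A *v x)) + t^2 * (y \<bullet> (A *v y))"
proof -
  have s: "x \<bullet> (A *v y) = y \<bullet> (A *v x)" by (rule sym_inner[OF assms])
  show ?thesis
    by (simp add: matrix_vector_mult_diff_distrib matrix_vector_mult_scaleR inner_diff_left
        inner_diff_right s power2_eq_square algebra_simps)
qed

definition qf :: "real^'n^'n \<Rightarrow> real^'n \<Rightarrow> real^'n \<Rightarrow> real" where
  "qf L u y = (1/2) * ((u - y) \<bullet> (L *v (u - y)))"

definition ismin :: "real^'n^'n \<Rightarrow> (real^'n \<Rightarrow> ereal) \<Rightarrow> real^'n \<Rightarrow> real^'n \<Rightarrow> bool" where
  "ismin L r u p \<longleftrightarrow> (\<forall>z. r p + ereal (qf L u p) \<le> r z + ereal (qf L u z))"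

lemma ismin_finite:
  assumes "proper_fun r" "ismin L r u p"
  shows "\<exists>a. r p = ereal a"
proof -
  obtain y0 where y0: "r y0 \<noteq> \<infinity>" using assms(1) unfolding proper_fun_def by auto
  have "r y0 \<noteq> -\<infinity>" "r p \<noteq> -\<infinity>" using assms(1) unfolding proper_fun_def by auto
  have "r p + ereal (qf L u p) \<le> r y0 + ereal (qf L u y0)" using assms(2) unfolding ismin_def by auto
  then have "r p \<noteq> \<infinity>" using y0 by auto
  with \<open>r p \<noteq> -\<infinity>\<close> show ?thesis by (cases "r p") auto
qed

lemma ismin_VI:
  assumes conv: "ext_convex r" and prp: "proper_fun r" and sym: "transpose L = L"
    and psd: "\<And>v. 0 \<le> v \<bullet> (L *v v)"
    and mn: "ismin L r u p" and rp: "r p = ereal a"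
  shows "ereal (a + (z - p) \<bullet> (L *v (u - p))) \<le> r z"
proof (cases "r z = \<infinity>")
  case True then show ?thesis by simp
next
  case False
  have "r z \<noteq> -\<infinity>" using prp unfolding proper_fun_def by auto
  with False obtain b where rz: "r z = ereal b" by (cases "r z") auto
  define w where "w = (z - p) \<bullet> (L *v (u - p))"
  define c where "c = (z - p) \<bullet> (L *v (z - p))"
  have c0: "0 \<le> c" using psd unfolding c_def by simp
  have key: "a \<le> b - w + t * c / 2" if t: "0 < t" "t \<le> 1" for t
  proof -
    define yt where "yt = (1 - t) *\<^sub>R p + t *\<^sub>R z"
    have "r yt \<le> ereal (1 - t) * r p + ereal t * r z"
      using conv t unfolding ext_convex_def yt_def by auto
    also have "\<dots> = ereal ((1 - t) * a + t * b)" using rp rz by simp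
    finally have ryt: "r yt \<le> ereal ((1 - t) * a + t * b)" .
    have "r p + ereal (qf L u p) \<le> r yt + ereal (qf L u yt)" using mn unfolding ismin_def by auto
    also have "\<dots> \<le> ereal ((1 - t) * a + t * b) + ereal (qf L u yt)"
      using ryt by (rule add_right_mono)
    finally have ineq: "a + qf L u p \<le> (1 - t) * a + t * b + qf L u yt" using rp by simp
    have uy: "u - yt = (u - p) - t *\<^sub>R (z - p)" unfolding yt_def by (simp add: algebra_simps)
    have "qf L u yt = (1/2) * (((u - p) - t *\<^sub>R (z - p)) \<bullet> (L *v ((u - p) - t *\<^sub>R (z - p))))"
      unfolding qf_def uy ..
    then have q1: "qf L u yt = (1/2) * ((u - p) \<bullet> (L *v (u - p)) - 2 * t * w + t^2 * c)"
      unfolding quad_expand[OF sym] w_def c_def by simp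
    have "qf L u p = (1/2) * ((u - p) \<bullet> (L *v (u - p)))" unfolding qf_def ..
    with q1 have "qf L u yt = qf L u p - t * w + t^2 * c / 2" by simp
    with ineq have "t * a \<le> t * (b - w + t * c / 2)" by (simp add: algebra_simps power2_eq_square)
    then show ?thesis using t by simp
  qed
  have "a + w \<le> b"
  proof (rule ccontr)
    assume "\<not> a + w \<le> b"
    then have g: "0 < a + w - b" by simp
    define t where "t = min 1 ((a + w - b) / (c + 1))"
    have t0: "0 < t" "t \<le> 1" using g c0 unfolding t_def by auto
    have "t * c \<le> (a + w - b) / (c + 1) * c" unfolding t_def using c0 by (intro mult_right_mono) auto
    also have "\<dots> < a + w - b" using g c0 by (simp add: field_simps)
    finally have "t * c < a + w - b" .
    then have "t * c / 2 < a + w - b" using g by linarith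
    with key[OF t0] show False by simp
  qed
  then show ?thesis using rz unfolding w_def by simp
qed

lemma ismin_FNE:
  assumes conv: "ext_convex r" and prp: "proper_fun r" and sym: "transpose L = L"
    and psd: "\<And>v. 0 \<le> v \<bullet> (L *v v)"
    and m1: "ismin L r u1 p1" and m2: "ismin L r u2 p2"
  shows "(p1 - p2) \<bullet> (L *v (p1 - p2)) \<le> (p1 - p2) \<bullet> (L *v (u1 - u2))"
proof -
  obtain a1 where a1: "r p1 = ereal a1" using ismin_finite[OF prp m1] by auto
  obtain a2 where a2: "r p2 = ereal a2" using ismin_finite[OF prp m2] by auto
  have "ereal (a1 + (p2 - p1) \<bullet> (L *v (u1 - p1))) \<le> r p2"
    by (rule ismin_VI[OF conv prp sym psd m1 a1])
  then have i1: "a1 + (p2 - p1) \<bullet> (L *v (u1 - p1)) \<le> a2" using a2 by simp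
  have "ereal (a2 + (p1 - p2) \<bullet> (L *v (u2 - p2))) \<le> r p1"
    by (rule ismin_VI[OF conv prp sym psd m2 a2])
  then have i2: "a2 + (p1 - p2) \<bullet> (L *v (u2 - p2)) \<le> a1" using a1 by simp
  have e: "(p2 - p1) \<bullet> (L *v (u1 - p1)) + (p1 - p2) \<bullet> (L *v (u2 - p2))
     = (p1 - p2) \<bullet> (L *v (p1 - p2)) - (p1 - p2) \<bullet> (L *v (u1 - u2))"
    by (simp add: matrix_vector_mult_diff_distrib inner_diff_left inner_diff_right algebra_simps)
  show ?thesis using i1 i2 e by linarith
qed


definition lscP :: "('a::topological_space \<Rightarrow> ereal) \<Rightarrow> bool" where
  "lscP g \<longleftrightarrow> (\<forall>x c. ereal c < g x \<longrightarrow> eventually (\<lambda>z. ereal c < g z) (at x))"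

lemma lsc_imp_lscP: "lsc r \<Longrightarrow> lscP r"
  unfolding lsc_def lscP_def by (metis le_Liminf_iff order_less_le_trans)

lemma lscP_min:
  fixes g :: "'a::topological_space \<Rightarrow> ereal"
  assumes g: "lscP g" and K: "compact K" "K \<noteq> {}"
  shows "\<exists>z\<in>K. \<forall>w\<in>K. g z \<le> g w"
proof (rule ccontr)
  assume "\<not> ?thesis"
  then have nm: "\<forall>z\<in>K. \<exists>w\<in>K. g w < g z" by (auto simp: not_le)
  have "\<forall>z\<in>K. \<exists>U w. open U \<and> z \<in> U \<and> w \<in> K \<and> (\<forall>y\<in>U. g w < g y)"
  proof
    fix z assume "z \<in> K"
    with nm obtain w where w: "w \<in> K" "g w < g z" by auto
    then obtain c where c: "g w < ereal c" "ereal c < g z" using ereal_dense2 by blast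
    then have "eventually (\<lambda>y. ereal c < g y) (at z)" using g unfolding lscP_def by auto
    then obtain S where S: "open S" "z \<in> S" "\<And>y. y \<in> S \<Longrightarrow> y \<noteq> z \<Longrightarrow> ereal c < g y"
      unfolding eventually_at_topological by auto
    have "\<forall>y\<in>S. g w < g y" using S c by (metis less_trans)
    then show "\<exists>U w. open U \<and> z \<in> U \<and> w \<in> K \<and> (\<forall>y\<in>U. g w < g y)"
      using S w by blast
  qed
  then obtain Uf Wf where UW: "\<And>z. z \<in> K \<Longrightarrow> open (Uf z) \<and> z \<in> Uf z \<and> Wf z \<in> K \<and> (\<forall>y\<in>Uf z. g (Wf z) < g y)"
    by metis
  have cov: "K \<subseteq> \<Union> (Uf ` K)" using UW by blast
  obtain C' where C': "C' \<subseteq> K" "finite C'" "K \<subseteq> \<Union> (Uf ` C')"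
    using compactE_image[OF K(1) _ cov] UW by metis
  have "C' \<noteq> {}" using C' K(2) by auto
  define m where "m = Min (g ` Wf ` C')"
  have fin: "finite (g ` Wf ` C')" using C' by simp
  have "m \<in> g ` Wf ` C'" unfolding m_def using fin \<open>C' \<noteq> {}\<close> by (intro Min_in) auto
  then obtain z' where z': "z' \<in> C'" "g (Wf z') = m" by auto
  have "Wf z' \<in> K" using UW z' C' by auto
  then obtain z'' where z'': "z'' \<in> C'" "Wf z' \<in> Uf z''" using C' by auto
  then have "g (Wf z'') < g (Wf z')" using UW C' by auto
  moreover have "m \<le> g (Wf z'')" unfolding m_def using fin z'' by (intro Min_le) auto
  ultimately show False using z' by simp
qed

lemma qf_cont: "continuous_on UNIV (qf L u)"
  unfolding qf_def by (intro continuous_intros continuous_on_compose2[OF linear_continuous_on[OF matrix_vector_mul_bounded_linear]]) auto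

lemma phi_lscP:
  assumes r: "lscP r" and nm: "\<And>x. r x \<noteq> -\<infinity>"
  shows "lscP (\<lambda>y. r y + ereal (qf L u y))"
  unfolding lscP_def
proof (intro allI impI)
  fix x c assume c: "ereal c < r x + ereal (qf L u x)"
  have "ereal (c - qf L u x) < r x" using c nm[of x] by (cases "r x") auto
  then obtain d where d: "ereal (c - qf L u x) < ereal d" "ereal d < r x" using ereal_dense2 by blast
  have e1: "eventually (\<lambda>z. ereal d < r z) (at x)" using r d(2) unfolding lscP_def by auto
  have "(qf L u \<longlongrightarrow> qf L u x) (at x)"
    using qf_cont by (metis continuous_on_def UNIV_I at_within_open open_UNIV)
  moreover have "c - d < qf L u x" using d(1) by simp
  ultimately have e2: "eventually (\<lambda>z. c - d < qf L u z) (at x)" by (rule order_tendstoD(1))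
  show "eventually (\<lambda>z. ereal c < r z + ereal (qf L u z)) (at x)"
    using e1 e2
  proof eventually_elim
    case (elim z)
    then show ?case using nm[of z] by (cases "r z") auto
  qed
qed


lemma ismin_exists:
  fixes L :: "real^'n^'n"
  assumes conv: "ext_convex r" and prp: "proper_fun r" and ls: "lsc r" and sym: "transpose L = L"
    and low: "\<And>v. lamm * (v \<bullet> v) \<le> v \<bullet> (L *v v)" and lm: "0 < lamm"
  shows "\<exists>p. ismin L r u p"
proof -
  have nm: "\<And>x. r x \<noteq> -\<infinity>" using prp unfolding proper_fun_def by auto
  obtain y0 where "r y0 \<noteq> \<infinity>" using prp unfolding proper_fun_def by auto
  then obtain r0 where r0: "r y0 = ereal r0" using nm[of y0] by (cases "r y0") auto
  have lr: "lscP r" using ls by (rule lsc_imp_lscP)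
  obtain z1 where z1: "z1 \<in> cball y0 1" "\<And>w. w \<in> cball y0 1 \<Longrightarrow> r z1 \<le> r w"
    using lscP_min[OF lr, of "cball y0 1"] by auto
  have "r z1 \<le> r y0" using z1 by auto
  then obtain m where m: "r z1 = ereal m" using nm[of z1] r0 by (cases "r z1") auto
  have mball: "\<And>w. w \<in> cball y0 1 \<Longrightarrow> ereal m \<le> r w" using z1 m by metis
  have mr0: "m \<le> r0" using mball[of y0] r0 by simp
  define A where "A = r0 - m"
  have A0: "0 \<le> A" using mr0 unfolding A_def by simp
  have linlow: "ereal (r0 - A * (1 + norm (y - y0))) \<le> r y" for y
  proof (cases "norm (y - y0) \<le> 1")
    case True
    then have "y \<in> cball y0 1" by (simp add: dist_norm norm_minus_commute)
    then have "ereal m \<le> r y" by (rule mball)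
    moreover have "r0 - A * (1 + norm (y - y0)) \<le> m" using A0 unfolding A_def
      by (simp add: algebra_simps) (metis mult_right_mono norm_ge_zero mr0)
    ultimately show ?thesis by (meson ereal_less_eq(3) order_trans)
  next
    case False
    show ?thesis
    proof (cases "r y = \<infinity>")
      case True then show ?thesis by simp
    next
      case False
      then obtain b where b: "r y = ereal b" using nm[of y] by (cases "r y") auto
      define \<rho> where "\<rho> = norm (y - y0)"
      have y_eq_x: "y \<noteq> y0" using \<open>\<not> norm (y - y0) \<le> 1\<close> by auto
      have rho1: "1 < \<rho>" using \<open>\<not> norm (y - y0) \<le> 1\<close> unfolding \<rho>_def by simp
      define t where "t = 1 / \<rho>"
      have t: "0 < t" "t \<le> 1" using rho1 unfolding t_def by auto
      define z where "z = (1 - t) *\<^sub>R y0 + t *\<^sub>R y"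
      have "z - y0 = t *\<^sub>R (y - y0)" unfolding z_def by (simp add: algebra_simps)
      then have "norm (z - y0) = t * \<rho>" using t unfolding \<rho>_def by simp
      then have "norm (z - y0) = 1" using rho1 unfolding t_def by simp
      then have "z \<in> cball y0 1" by (simp add: dist_norm norm_minus_commute)
      then have "ereal m \<le> r z" by (rule mball)
      also have "r z \<le> ereal (1 - t) * r y0 + ereal t * r y"
        using conv t unfolding ext_convex_def z_def by auto
      also have "\<dots> = ereal ((1 - t) * r0 + t * b)" using r0 b by simp
      finally have "m \<le> (1 - t) * r0 + t * b" by simp
      then have "m * \<rho> \<le> ((1 - t) * r0 + t * b) * \<rho>" using rho1 by (intro mult_right_mono) auto
      also have "\<dots> = r0 * \<rho> - r0 + b" using rho1 unfolding t_def by (simp add: field_simps)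
      finally have "r0 - A * \<rho> \<le> b" unfolding A_def by (simp add: algebra_simps)
      then have "r0 - A * (1 + \<rho>) \<le> b" using A0 by (simp add: algebra_simps)
      then show ?thesis using b unfolding \<rho>_def by simp
    qed
  qed
  have qlow: "lamm / 2 * (norm (u - y))^2 \<le> qf L u y" for y
    using low[of "u - y"] unfolding qf_def by (simp add: power2_norm_eq_inner)
  have q0: "0 \<le> qf L u y" for y
    using qlow[of y] lm by (metis divide_nonneg_pos less_imp_le zero_le_power2 mult_nonneg_nonneg order_trans zero_less_numeral)
  define d where "d = norm (u - y0)"
  define B where "B = A * (1 + d) + qf L u y0 + 1"
  have B1: "1 \<le> B" unfolding B_def using A0 q0[of y0] d_def by simp
  define R where "R = max 1 (max d ((2 / lamm) * (A + B)))"
  define K where "K = cball u R"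
  have "K \<noteq> {}" "compact K" unfolding K_def R_def by auto
  have y0K: "y0 \<in> K" unfolding K_def R_def d_def by (simp add: dist_norm)
  have lphi: "lscP (\<lambda>y. r y + ereal (qf L u y))" using lr nm by (rule phi_lscP)
  obtain p where p: "p \<in> K" "\<And>w. w \<in> K \<Longrightarrow> r p + ereal (qf L u p) \<le> r w + ereal (qf L u w)"
    using lscP_min[OF lphi \<open>compact K\<close> \<open>K \<noteq> {}\<close>] by auto
  have outside: "r y0 + ereal (qf L u y0) \<le> r y + ereal (qf L u y)" if y: "y \<notin> K" for y
  proof -
    define \<sigma> where "\<sigma> = norm (u - y)"
    have sR: "R < \<sigma>" using y unfolding K_def \<sigma>_def by (simp add: dist_norm)
    have s1: "1 \<le> \<sigma>" using sR unfolding R_def by simp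
    have yy0: "norm (y - y0) \<le> \<sigma> + d" unfolding \<sigma>_def d_def
      using norm_triangle_ineq[of "y - u" "u - y0"] by (simp add: norm_minus_commute)
    have "(2 / lamm) * (A + B) \<le> \<sigma>" using sR unfolding R_def by simp
    then have "A + B \<le> lamm / 2 * \<sigma>" using lm by (simp add: field_simps)
    then have "B * \<sigma> \<le> (lamm / 2 * \<sigma> - A) * \<sigma>" using s1 by (intro mult_right_mono) auto
    moreover have "B \<le> B * \<sigma>" using s1 B1 by simp
    ultimately have "B \<le> lamm / 2 * \<sigma>^2 - A * \<sigma>" by (simp add: power2_eq_square algebra_simps)
    moreover have "A * norm (y - y0) \<le> A * (\<sigma> + d)" using yy0 A0 by (rule mult_left_mono)
    moreover have "lamm / 2 * \<sigma>^2 \<le> qf L u y" using qlow unfolding \<sigma>_def by simp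
    ultimately have "r0 + qf L u y0 \<le> (r0 - A * (1 + norm (y - y0))) + qf L u y"
      unfolding B_def by (simp add: algebra_simps)
    then have "ereal (r0 + qf L u y0) \<le> ereal (r0 - A * (1 + norm (y - y0))) + ereal (qf L u y)"
      by simp
    also have "\<dots> \<le> r y + ereal (qf L u y)" using linlow[of y] by (rule add_right_mono)
    finally show ?thesis using r0 by simp
  qed
  have "ismin L r u p" unfolding ismin_def
  proof
    fix z show "r p + ereal (qf L u p) \<le> r z + ereal (qf L u z)"
    proof (cases "z \<in> K")
      case True then show ?thesis using p by blast
    next
      case False
      have "r p + ereal (qf L u p) \<le> r y0 + ereal (qf L u y0)" using p y0K by blast
      also have "\<dots> \<le> r z + ereal (qf L u z)" using outside False by blast
      finally show ?thesis .
    qed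
  qed
  then show ?thesis ..
qed


lemma prox_ismin:
  fixes L :: "real^'n^'n"
  assumes conv: "ext_convex r" and prp: "proper_fun r" and ls: "lsc r" and sym: "transpose L = L"
    and low: "\<And>v. lamm * (v \<bullet> v) \<le> v \<bullet> (L *v v)" and lm: "0 < lamm"
  shows "ismin L r u (prox L r u)"
proof -
  have psd: "0 \<le> v \<bullet> (L *v v)" for v using low[of v] lm by (meson inner_ge_zero mult_nonneg_nonneg less_imp_le order_trans)
  obtain p where p: "ismin L r u p" using ismin_exists[OF conv prp ls sym low lm] by auto
  have uniq: "y = p" if "ismin L r u y" for y
  proof -
    have "(y - p) \<bullet> (L *v (y - p)) \<le> (y - p) \<bullet> (L *v (u - u))"
      by (rule ismin_FNE[OF conv prp sym psd that p])
    then have "lamm * ((y - p) \<bullet> (y - p)) \<le> 0" using low[of "y - p"] by simp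
    then have "(y - p) \<bullet> (y - p) \<le> 0" using lm by (simp add: mult_le_0_iff)
    then show ?thesis by (metis inner_ge_zero antisym inner_eq_zero_iff right_minus_eq)
  qed
  have "prox L r u = (THE y. ismin L r u y)" unfolding prox_def ismin_def qf_def ..
  also have "\<dots> = p" using p uniq by (rule the_equality)
  finally show ?thesis using p by simp
qed

lemma prox_FNE:
  fixes L :: "real^'n^'n"
  assumes conv: "ext_convex r" and prp: "proper_fun r" and ls: "lsc r" and sym: "transpose L = L"
    and low: "\<And>v. lamm * (v \<bullet> v) \<le> v \<bullet> (L *v v)" and lm: "0 < lamm"
  shows "(prox L r a - prox L r b) \<bullet> (L *v (prox L r a - prox L r b))
          \<le> (prox L r a - prox L r b) \<bullet> (L *v (a - b))"
proof -
  have psd: "0 \<le> v \<bullet> (L *v v)" for v using low[of v] lm by (meson inner_ge_zero mult_nonneg_nonneg less_imp_le order_trans)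
  show ?thesis
    by (rule ismin_FNE[OF conv prp sym psd prox_ismin[OF assms] prox_ismin[OF assms]])
qed

definition Sset :: "real^'n^'n \<Rightarrow> (real^'n^'n) set" where
  "Sset L = {D. \<forall>h. (D *v h) \<bullet> (L *v (D *v h)) \<le> (D *v h) \<bullet> (L *v h)}"

lemma jac_in_S:
  fixes F :: "real^'n \<Rightarrow> real^'n" and L :: "real^'n^'n"
  assumes fne: "\<And>a b. (F a - F b) \<bullet> (L *v (F a - F b)) \<le> (F a - F b) \<bullet> (L *v (a - b))"
    and dif: "F differentiable (at y)"
  shows "jacobian F (at y) \<in> Sset L"
  unfolding Sset_def
proof (intro CollectI allI)
  fix h
  define J where "J = jacobian F (at y)"
  have hd: "(F has_derivative (\<lambda>v. J *v v)) (at y)" using dif jacobian_works unfolding J_def by blast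
  define Q where "Q = (\<lambda>\<tau>::real. (1 / \<tau>) *\<^sub>R (F (y + \<tau> *\<^sub>R h) - F y))"
  have lim: "(Q \<longlongrightarrow> J *v h) (at 0)"
    unfolding tendsto_iff
  proof (intro allI impI)
    fix e :: real assume e: "0 < e"
    define e' where "e' = e / (2 * (norm h + 1))"
    have nh: "0 < norm h + 1" by (simp add: add_nonneg_pos)
    have e': "0 < e'" unfolding e'_def using e nh by simp
    obtain d where d: "0 < d" "\<And>z. norm (z - y) < d \<Longrightarrow> norm (F z - F y - J *v (z - y)) \<le> e' * norm (z - y)"
      using hd e' unfolding has_derivative_at_alt by blast
    have "\<forall>\<^sub>F \<tau> in at 0. dist (Q \<tau>) (J *v h) < e"
      unfolding eventually_at
    proof (intro exI[of _ "d / (norm h + 1)"] conjI ballI allI impI)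
      show "0 < d / (norm h + 1)" using d nh by simp
      fix \<tau> :: real assume \<tau>: "\<tau> \<noteq> 0 \<and> dist \<tau> 0 < d / (norm h + 1)"
      have "norm (\<tau> *\<^sub>R h) = \<bar>\<tau>\<bar> * norm h" by simp
      also have "\<dots> \<le> \<bar>\<tau>\<bar> * (norm h + 1)" by (simp add: mult_left_mono)
      also have "\<dots> < d" using \<tau> nh by (simp add: pos_less_divide_eq)
      finally have "norm ((y + \<tau> *\<^sub>R h) - y) < d" by simp
      then have bd: "norm (F (y + \<tau> *\<^sub>R h) - F y - J *v (\<tau> *\<^sub>R h)) \<le> e' * (\<bar>\<tau>\<bar> * norm h)"
        using d(2) by fastforce
      have "Q \<tau> - J *v h = (1 / \<tau>) *\<^sub>R (F (y + \<tau> *\<^sub>R h) - F y - J *v (\<tau> *\<^sub>R h))"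
        using \<tau> unfolding Q_def by (simp add: matrix_vector_mult_scaleR algebra_simps)
      then have "norm (Q \<tau> - J *v h) = norm (F (y + \<tau> *\<^sub>R h) - F y - J *v (\<tau> *\<^sub>R h)) / \<bar>\<tau>\<bar>"
        by simp
      also have "\<dots> \<le> e' * (\<bar>\<tau>\<bar> * norm h) / \<bar>\<tau>\<bar>" using bd by (intro divide_right_mono) auto
      also have "\<dots> = e' * norm h" using \<tau> by simp
      also have "\<dots> \<le> e' * (norm h + 1)" using e' by simp
      also have "\<dots> = e / 2" unfolding e'_def using nh by (simp add: field_simps)
      also have "\<dots> < e" using e by simp
      finally show "dist (Q \<tau>) (J *v h) < e" by (simp add: dist_norm)
    qed
    then show "\<forall>\<^sub>F \<tau> in at 0. dist (Q \<tau>) (J *v h) < e" .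
  qed
  have ev: "\<forall>\<^sub>F \<tau> in at (0::real). Q \<tau> \<bullet> (L *v Q \<tau>) - Q \<tau> \<bullet> (L *v h) \<le> 0"
    unfolding eventually_at
  proof (intro exI[of _ 1] conjI ballI allI impI)
    fix \<tau> :: real assume \<tau>: "\<tau> \<noteq> 0 \<and> dist \<tau> 0 < 1"
    define \<Delta> where "\<Delta> = F (y + \<tau> *\<^sub>R h) - F y"
    have "\<Delta> \<bullet> (L *v \<Delta>) \<le> \<Delta> \<bullet> (L *v ((y + \<tau> *\<^sub>R h) - y))" unfolding \<Delta>_def by (rule fne)
    then have "\<Delta> \<bullet> (L *v \<Delta>) \<le> \<tau> * (\<Delta> \<bullet> (L *v h))" by (simp add: matrix_vector_mult_scaleR)
    then have "(1/\<tau>)^2 * (\<Delta> \<bullet> (L *v \<Delta>)) \<le> (1/\<tau>)^2 * (\<tau> * (\<Delta> \<bullet> (L *v h)))"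
      by (intro mult_left_mono) auto
    moreover have "Q \<tau> \<bullet> (L *v Q \<tau>) = (1/\<tau>)^2 * (\<Delta> \<bullet> (L *v \<Delta>))"
      unfolding Q_def \<Delta>_def[symmetric] by (simp add: matrix_vector_mult_scaleR power2_eq_square)
    moreover have "Q \<tau> \<bullet> (L *v h) = (1/\<tau>)^2 * (\<tau> * (\<Delta> \<bullet> (L *v h)))"
      unfolding Q_def \<Delta>_def[symmetric] using \<tau> by (simp add: power2_eq_square)
    ultimately show "Q \<tau> \<bullet> (L *v Q \<tau>) - Q \<tau> \<bullet> (L *v h) \<le> 0" by simp
  qed simp
  have bl: "bounded_linear ((*v) L)" by (rule matrix_vector_mul_bounded_linear)
  have "((\<lambda>\<tau>. Q \<tau> \<bullet> (L *v Q \<tau>) - Q \<tau> \<bullet> (L *v h)) \<longlongrightarrow>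
           (J *v h) \<bullet> (L *v (J *v h)) - (J *v h) \<bullet> (L *v h)) (at 0)"
    by (intro tendsto_intros lim bounded_linear.tendsto[OF bl])
  then have "(J *v h) \<bullet> (L *v (J *v h)) - (J *v h) \<bullet> (L *v h) \<le> 0"
    using ev by (rule tendsto_upperbound) simp
  then show "(J *v h) \<bullet> (L *v (J *v h)) \<le> (J *v h) \<bullet> (L *v h)" by simp
qed



lemma mv_bound:
  fixes A :: "real^'n^'n"
  shows "norm (A *v x) \<le> (real CARD('n) * real CARD('n)) * norm A * norm x"
proof -
  have "\<bar>A $ i $ j\<bar> \<le> norm A" for i j
  proof -
    have "\<bar>A $ i $ j\<bar> \<le> norm (A $ i)" by (rule component_le_norm_cart)
    also have "norm (A $ i) \<le> norm A" unfolding norm_vec_def[of A] by (rule member_le_L2_set) simp_all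
    finally show ?thesis .
  qed
  then have "onorm ((*v) A) \<le> real CARD('n) * real CARD('n) * norm A"
    by (rule onorm_le_matrix_component)
  moreover have "norm (A *v x) \<le> onorm ((*v) A) * norm x"
    by (rule onorm[OF matrix_vector_mul_bounded_linear])
  ultimately show ?thesis by (meson mult_right_mono norm_ge_zero order_trans)
qed

lemma bl_mv_left: "bounded_linear (\<lambda>A::real^'n^'n. A *v x)"
proof (rule bounded_linear_intro[where K = "real CARD('n) * real CARD('n) * norm x"])
  show "(A + B) *v x = A *v x + B *v x" for A B :: "real^'n^'n" by (rule matrix_vector_mult_add_rdistrib)
  show "(r *\<^sub>R A) *v x = r *\<^sub>R (A *v x)" for r and A :: "real^'n^'n" by (simp add: scaleR_matrix_vector_assoc)
  show "norm (A *v x) \<le> norm A * (real CARD('n) * real CARD('n) * norm x)" for A :: "real^'n^'n"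
    using mv_bound[of A x] by (simp add: algebra_simps)
qed

lemma cont_mv_left: "continuous_on UNIV (\<lambda>A::real^'n^'n. A *v x)"
  by (rule linear_continuous_on[OF bl_mv_left])

lemma S_bound0:
  fixes L D :: "real^'n^'n"
  assumes D: "D \<in> Sset L" and low: "\<And>v. lamm * (v \<bullet> v) \<le> v \<bullet> (L *v v)" and lm: "0 < lamm"
  shows "lamm * norm (D *v h) \<le> norm (L *v h)"
proof -
  define y where "y = D *v h"
  have "lamm * (norm y)^2 \<le> y \<bullet> (L *v y)" using low[of y] by (simp add: power2_norm_eq_inner)
  also have "\<dots> \<le> y \<bullet> (L *v h)" using D unfolding Sset_def y_def by auto
  also have "\<dots> \<le> norm y * norm (L *v h)" by (rule norm_cauchy_schwarz)
  finally have *: "lamm * (norm y)^2 \<le> norm y * norm (L *v h)" .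
  show ?thesis
  proof (cases "norm y = 0")
    case True then show ?thesis unfolding y_def by simp
  next
    case False
    then have "0 < norm y" by simp
    with * have "norm y * (lamm * norm y) \<le> norm y * norm (L *v h)" by (simp add: power2_eq_square algebra_simps)
    then show ?thesis using \<open>0 < norm y\<close> unfolding y_def by simp
  qed
qed

lemma S_closed: "closed (Sset (L::real^'n^'n))"
proof -
  have "Sset L = (\<Inter>h. {D. (D *v h) \<bullet> (L *v (D *v h)) - (D *v h) \<bullet> (L *v h) \<le> 0})"
    unfolding Sset_def by auto
  moreover have "closed {D. (D *v h) \<bullet> (L *v (D *v h)) - (D *v h) \<bullet> (L *v h) \<le> (0::real)}" for h
  proof -
    have c: "continuous_on UNIV (\<lambda>D::real^'n^'n. D *v h)" by (rule cont_mv_left)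
    have "continuous_on UNIV (\<lambda>D::real^'n^'n. (D *v h) \<bullet> (L *v (D *v h)) - (D *v h) \<bullet> (L *v h))"
      by (intro continuous_intros c continuous_on_compose2[OF linear_continuous_on[OF matrix_vector_mul_bounded_linear] c]) auto
    then show ?thesis by (intro closed_Collect_le) (auto intro: continuous_intros)
  qed
  ultimately show ?thesis by (auto intro: closed_INT)
qed

lemma quad_convex:
  fixes L :: "real^'n^'n"
  assumes sym: "transpose L = L" and ab: "a + b = (1::real)"
  shows "(a *\<^sub>R y1 + b *\<^sub>R y2) \<bullet> (L *v (a *\<^sub>R y1 + b *\<^sub>R y2)) =
    a * (y1 \<bullet> (L *v y1)) + b * (y2 \<bullet> (L *v y2)) - a * b * ((y1 - y2) \<bullet> (L *v (y1 - y2)))"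
proof -
  have s: "y2 \<bullet> (L *v y1) = y1 \<bullet> (L *v y2)" by (rule sym_inner[OF sym])
  have b: "b = 1 - a" using ab by simp
  show ?thesis unfolding b
    by (simp add: matrix_vector_right_distrib matrix_vector_mult_diff_distrib matrix_vector_mult_scaleR
        inner_add_left inner_add_right inner_diff_left inner_diff_right s algebra_simps)
qed

lemma S_convex:
  fixes L :: "real^'n^'n"
  assumes sym: "transpose L = L" and psd: "\<And>v. 0 \<le> v \<bullet> (L *v v)"
  shows "convex (Sset L)"
  unfolding convex_def
proof (intro ballI allI impI)
  fix D1 D2 and a b :: real assume D1: "D1 \<in> Sset L" and D2: "D2 \<in> Sset L" and ab: "0 \<le> a" "0 \<le> b" "a + b = 1"
  show "a *\<^sub>R D1 + b *\<^sub>R D2 \<in> Sset L" unfolding Sset_def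
  proof (intro CollectI allI)
    fix h
    define y1 where "y1 = D1 *v h"
    define y2 where "y2 = D2 *v h"
    have e: "(a *\<^sub>R D1 + b *\<^sub>R D2) *v h = a *\<^sub>R y1 + b *\<^sub>R y2"
      unfolding y1_def y2_def by (simp add: matrix_vector_mult_add_rdistrib scaleR_matrix_vector_assoc)
    have i1: "y1 \<bullet> (L *v y1) \<le> y1 \<bullet> (L *v h)" using D1 unfolding Sset_def y1_def by auto
    have i2: "y2 \<bullet> (L *v y2) \<le> y2 \<bullet> (L *v h)" using D2 unfolding Sset_def y2_def by auto
    have "0 \<le> a * b * ((y1 - y2) \<bullet> (L *v (y1 - y2)))" using ab psd by simp
    moreover have "a * (y1 \<bullet> (L *v y1)) \<le> a * (y1 \<bullet> (L *v h))" using i1 ab by (intro mult_left_mono) auto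
    moreover have "b * (y2 \<bullet> (L *v y2)) \<le> b * (y2 \<bullet> (L *v h))" using i2 ab by (intro mult_left_mono) auto
    ultimately have "(a *\<^sub>R y1 + b *\<^sub>R y2) \<bullet> (L *v (a *\<^sub>R y1 + b *\<^sub>R y2)) \<le> (a *\<^sub>R y1 + b *\<^sub>R y2) \<bullet> (L *v h)"
      unfolding quad_convex[OF sym ab(3)] by (simp add: inner_add_left)
    then show "((a *\<^sub>R D1 + b *\<^sub>R D2) *v h) \<bullet> (L *v ((a *\<^sub>R D1 + b *\<^sub>R D2) *v h))
        \<le> ((a *\<^sub>R D1 + b *\<^sub>R D2) *v h) \<bullet> (L *v h)" unfolding e .
  qed
qed

lemma S_bounded:
  fixes L :: "real^'n^'n"
  assumes low: "\<And>v. lamm * (v \<bullet> v) \<le> v \<bullet> (L *v v)" and lm: "0 < lamm"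
  shows "bounded (Sset L)"
proof -
  define K where "K = onorm ((*v) L) / lamm"
  have comp: "\<bar>D $ i $ j\<bar> \<le> K" if D: "D \<in> Sset L" for D i j
  proof -
    have "D $ i $ j = (D *v axis j 1) $ i"
      by (simp add: matrix_vector_mult_basis column_def)
    then have "\<bar>D $ i $ j\<bar> \<le> norm (D *v axis j 1)" using component_le_norm_cart by metis
    also have "lamm * norm (D *v axis j 1) \<le> norm (L *v axis j 1)" by (rule S_bound0[OF D low lm])
    then have "norm (D *v axis j 1) \<le> norm (L *v axis j 1) / lamm" using lm by (simp add: field_simps)
    also have "norm (L *v axis j 1) \<le> onorm ((*v) L) * norm (axis j (1::real))"
      by (rule onorm[OF matrix_vector_mul_bounded_linear])
    then have "norm (L *v axis j 1) / lamm \<le> K" unfolding K_def using lm by (simp add: divide_right_mono)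
    finally show ?thesis .
  qed
  have "norm D \<le> real CARD('n) * (real CARD('n) * K)" if D: "D \<in> Sset L" for D
  proof -
    have "norm D \<le> (\<Sum>i\<in>UNIV. norm (D $ i))" by (simp add: norm_vec_def L2_set_le_sum)
    also have "\<dots> \<le> (\<Sum>i\<in>(UNIV::'n set). real CARD('n) * K)"
    proof (rule sum_mono)
      fix i
      have "norm (D $ i) \<le> (\<Sum>j\<in>UNIV. \<bar>D $ i $ j\<bar>)" by (rule norm_le_l1_cart)
      also have "\<dots> \<le> (\<Sum>j\<in>(UNIV::'n set). K)" using comp[OF D] by (intro sum_mono) auto
      finally show "norm (D $ i) \<le> real CARD('n) * K" by simp
    qed
    finally show ?thesis by simp
  qed
  then show ?thesis unfolding bounded_iff by blast
qed


lemma bou_subset_S: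
  fixes F :: "real^'n \<Rightarrow> real^'n"
  assumes S: "closed S" and jS: "\<And>y. F differentiable (at y) \<Longrightarrow> jacobian F (at y) \<in> S"
  shows "bouligand_jac F u \<subseteq> S"
proof
  fix B assume "B \<in> bouligand_jac F u"
  then obtain xs where xs: "\<forall>k. F differentiable (at (xs k))" "(\<lambda>k. jacobian F (at (xs k))) \<longlonglongrightarrow> B"
    unfolding bouligand_jac_def by auto
  have "\<And>k. jacobian F (at (xs k)) \<in> S" using xs(1) by (intro jS) blast
  then show "B \<in> S" by (rule closed_sequentially[OF S _ xs(2)])
qed

lemma clarke_subset_S:
  fixes F :: "real^'n \<Rightarrow> real^'n"
  assumes S: "closed S" "convex S" and jS: "\<And>y. F differentiable (at y) \<Longrightarrow> jacobian F (at y) \<in> S"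
  shows "clarke_jac F u \<subseteq> S"
  unfolding clarke_jac_def by (intro hull_minimal[OF bou_subset_S[OF S(1) jS]] S(2))

lemma usc_point:
  fixes F :: "real^'n \<Rightarrow> real^'n"
  assumes S: "closed S" "bounded S" and jS: "\<And>y. F differentiable (at y) \<Longrightarrow> jacobian F (at y) \<in> S"
    and e: "0 < e"
  shows "\<exists>\<delta>>0. \<forall>y. F differentiable (at y) \<and> dist y u0 < \<delta> \<longrightarrow>
            (\<exists>B\<in>bouligand_jac F u0. norm (jacobian F (at y) - B) < e)"
proof (rule ccontr)
  assume neg: "\<not> ?thesis"
  define P where "P = (\<lambda>y. F differentiable (at y) \<and> (\<forall>B\<in>bouligand_jac F u0. e \<le> norm (jacobian F (at y) - B)))"
  have "\<forall>k::nat. \<exists>y. dist y u0 < 1 / Suc k \<and> P y"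
  proof
    fix k :: nat
    have pos: "(0::real) < 1 / Suc k" by simp
    show "\<exists>y. dist y u0 < 1 / Suc k \<and> P y"
    proof (rule ccontr)
      assume "\<not> (\<exists>y. dist y u0 < 1 / Suc k \<and> P y)"
      then have "\<forall>y. F differentiable (at y) \<and> dist y u0 < 1 / Suc k \<longrightarrow>
            (\<exists>B\<in>bouligand_jac F u0. norm (jacobian F (at y) - B) < e)"
        unfolding P_def by (auto simp: not_le)
      then have "\<exists>\<delta>>0. \<forall>y. F differentiable (at y) \<and> dist y u0 < \<delta> \<longrightarrow>
            (\<exists>B\<in>bouligand_jac F u0. norm (jacobian F (at y) - B) < e)"
        using pos by (intro exI[of _ "1 / Suc k"]) simp
      with neg show False by contradiction
    qed
  qed
  then obtain ys where ysa: "\<forall>k. dist (ys k) u0 < 1 / Suc k \<and> P (ys k)"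
    by (rule choice[THEN exE]) 
  have ys: "\<And>k. F differentiable (at (ys k))" "\<And>k. dist (ys k) u0 < 1 / Suc k"
      "\<And>k B. B \<in> bouligand_jac F u0 \<Longrightarrow> e \<le> norm (jacobian F (at (ys k)) - B)"
    using ysa unfolding P_def by auto
  have "range (\<lambda>k. jacobian F (at (ys k))) \<subseteq> S" using jS[OF ys(1)] by auto
  then have "bounded (range (\<lambda>k. jacobian F (at (ys k))))" using S(2) bounded_subset by blast
  then obtain B \<phi> where \<phi>: "strict_mono \<phi>" "((\<lambda>k. jacobian F (at (ys k))) \<circ> \<phi>) \<longlonglongrightarrow> B"
    using bounded_imp_convergent_subsequence by blast
  have "(\<lambda>k. dist (ys k) u0) \<longlonglongrightarrow> 0"
  proof (rule tendsto_sandwich[where f="\<lambda>_. 0" and h="\<lambda>k. 1 / real (Suc k)"])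
    show "\<forall>\<^sub>F n in sequentially. 0 \<le> dist (ys n) u0" by simp
    show "\<forall>\<^sub>F n in sequentially. dist (ys n) u0 \<le> 1 / real (Suc n)" using ys(2) by (intro always_eventually allI less_imp_le)
    show "(\<lambda>k. 0) \<longlonglongrightarrow> (0::real)" by simp
    show "(\<lambda>k. 1 / real (Suc k)) \<longlonglongrightarrow> 0" by (rule LIMSEQ_Suc[OF lim_const_over_n])
  qed
  then have "ys \<longlonglongrightarrow> u0" using tendsto_dist_iff by blast
  then have "(ys \<circ> \<phi>) \<longlonglongrightarrow> u0" using \<phi>(1) by (rule LIMSEQ_subseq_LIMSEQ)
  then have Bb: "B \<in> bouligand_jac F u0" unfolding bouligand_jac_def
    using \<phi>(2) ys(1) by (auto intro!: exI[of _ "ys \<circ> \<phi>"] simp: o_def)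
  have "eventually (\<lambda>k. dist (((\<lambda>k. jacobian F (at (ys k))) \<circ> \<phi>) k) B < e) sequentially"
    using \<phi>(2) e by (rule tendstoD)
  then obtain k where "dist (jacobian F (at (ys (\<phi> k)))) B < e" by (auto dest: eventually_happens)
  then show False using ys(3)[OF Bb, of "\<phi> k"] by (simp add: dist_norm)
qed


lemma clarke_usc:
  fixes F :: "real^'n \<Rightarrow> real^'n"
  assumes S: "closed S" "bounded S" "convex S" and jS: "\<And>y. F differentiable (at y) \<Longrightarrow> jacobian F (at y) \<in> S"
    and e: "0 < e"
  shows "\<exists>\<delta>>0. \<forall>u. dist u u0 < \<delta> \<longrightarrow>
            (\<forall>D\<in>clarke_jac F u. \<exists>D'\<in>closure (clarke_jac F u0). norm (D - D') \<le> e)"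
proof -
  have ex: "\<exists>\<delta>>0. \<forall>y. F differentiable (at y) \<and> dist y u0 < \<delta> \<longrightarrow>
            (\<exists>B\<in>bouligand_jac F u0. norm (jacobian F (at y) - B) < e)"
    using usc_point[OF S(1,2) jS e, of u0] by simp
  obtain \<delta> where \<delta>0: "0 < \<delta>" and \<delta>1: "\<forall>y. F differentiable (at y) \<and> dist y u0 < \<delta> \<longrightarrow>
            (\<exists>B\<in>bouligand_jac F u0. norm (jacobian F (at y) - B) < e)"
    using ex by (elim exE conjE)
  have \<delta>: "0 < \<delta>" "\<And>y. F differentiable (at y) \<Longrightarrow> dist y u0 < \<delta> \<Longrightarrow>
            (\<exists>B\<in>bouligand_jac F u0. norm (jacobian F (at y) - B) < e)"
    using \<delta>0 \<delta>1 by simp_all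
  define P where "P = closure (clarke_jac F u0)"
  have "clarke_jac F u0 \<subseteq> S" by (rule clarke_subset_S[OF S(1,3) jS])
  then have "bounded (clarke_jac F u0)" by (rule bounded_subset[OF S(2)])
  then have cP: "compact P" unfolding P_def by simp
  have BP: "bouligand_jac F u0 \<subseteq> P" unfolding P_def clarke_jac_def
    by (rule order_trans[OF hull_subset closure_subset])
  define T where "T = (\<Union>x\<in>cball 0 e. \<Union>y\<in>P. {x + y})"
  have memT: "D \<in> T \<longleftrightarrow> (\<exists>D'\<in>P. norm (D - D') \<le> e)" for D
  proof
    assume "D \<in> T"
    then obtain x y where "x \<in> cball 0 e" "y \<in> P" "D = x + y" unfolding T_def by blast
    then show "\<exists>D'\<in>P. norm (D - D') \<le> e" by (intro bexI[of _ y]) auto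
  next
    assume "\<exists>D'\<in>P. norm (D - D') \<le> e"
    then obtain D' where "D' \<in> P" "norm (D - D') \<le> e" by blast
    then have "D - D' \<in> cball 0 e" "D = (D - D') + D'" by auto
    then show "D \<in> T" unfolding T_def using \<open>D' \<in> P\<close> by blast
  qed
  have clT: "closed T" unfolding T_def by (rule closed_compact_sums[OF closed_cball cP])
  have cvT: "convex T" unfolding T_def P_def clarke_jac_def
    by (intro convex_sums convex_cball convex_closure convex_convex_hull)
  have "\<forall>D\<in>clarke_jac F u. \<exists>D'\<in>P. norm (D - D') \<le> e" if u: "dist u u0 < \<delta>" for u
  proof -
    have "bouligand_jac F u \<subseteq> T"
    proof
      fix B assume "B \<in> bouligand_jac F u"
      then obtain xs where xs: "xs \<longlonglongrightarrow> u" "\<forall>k. F differentiable (at (xs k))"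
          "(\<lambda>k. jacobian F (at (xs k))) \<longlonglongrightarrow> B"
        unfolding bouligand_jac_def by auto
      have "0 < \<delta> - dist u u0" using u by simp
      then have "eventually (\<lambda>k. dist (xs k) u < \<delta> - dist u u0) sequentially"
        using xs(1) by (rule tendstoD[rotated])
      then have "eventually (\<lambda>k. jacobian F (at (xs k)) \<in> T) sequentially"
      proof eventually_elim
        case (elim k)
        have "dist (xs k) u0 \<le> dist (xs k) u + dist u u0" by (rule dist_triangle)
        then have "dist (xs k) u0 < \<delta>" using elim by simp
        then obtain B' where "B' \<in> bouligand_jac F u0" "norm (jacobian F (at (xs k)) - B') < e"
          using \<delta>(2)[OF xs(2)[rule_format]] by blast
        then show ?case unfolding memT using BP by (intro bexI[of _ B']) auto
      qed
      then show "B \<in> T" using clT xs(3) by (intro Lim_in_closed_set[OF clT]) auto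
    qed
    then have "clarke_jac F u \<subseteq> T" unfolding clarke_jac_def by (intro hull_minimal cvT)
    then show ?thesis using memT by blast
  qed
  then show ?thesis using \<delta>(1) unfolding P_def by blast
qed


lemma inv_props:
  fixes A :: "real^'n^'n"
  assumes "invertible A"
  shows "A ** matrix_inv A = mat 1" "matrix_inv A ** A = mat 1"
proof -
  have "\<exists>A'. A ** A' = mat 1 \<and> A' ** A = mat 1" using assms unfolding invertible_def .
  then have "A ** matrix_inv A = mat 1 \<and> matrix_inv A ** A = mat 1"
    unfolding matrix_inv_def by (rule someI_ex)
  then show "A ** matrix_inv A = mat 1" "matrix_inv A ** A = mat 1" by auto
qed

lemma Mmul:
  fixes D A B :: "real^'n^'n"
  shows "(mat 1 - D + D ** A ** B) *v v = v - D *v v + D *v (A *v (B *v v))"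
  by (simp add: matrix_vector_mult_add_rdistrib matrix_vector_mult_diff_rdistrib matrix_vector_mul_assoc matrix_mul_assoc)

lemma lower_inv:
  fixes M :: "real^'n^'n"
  assumes "invertible M" "mnorm (matrix_inv M) \<le> C"
  shows "norm v \<le> C * norm (M *v v)"
proof -
  have "v = matrix_inv M *v (M *v v)" by (simp add: matrix_vector_mul_assoc inv_props[OF assms(1)])
  then have "norm v = norm (matrix_inv M *v (M *v v))" by simp
  also have "\<dots> \<le> onorm ((*v) (matrix_inv M)) * norm (M *v v)"
    by (rule onorm[OF matrix_vector_mul_bounded_linear])
  also have "\<dots> \<le> C * norm (M *v v)" using assms(2) unfolding mnorm_def
    by (intro mult_right_mono) auto
  finally show ?thesis .
qed

lemma inv_from_lower:
  fixes M :: "real^'n^'n"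
  assumes c: "0 < c" and low: "\<And>v. c * norm v \<le> norm (M *v v)"
  shows "invertible M" "mnorm (matrix_inv M) \<le> 1 / c"
proof -
  have "\<forall>x. M *v x = 0 \<longrightarrow> x = 0"
  proof (intro allI impI)
    fix x assume "M *v x = 0"
    then have "c * norm x \<le> 0" using low[of x] by simp
    then show "x = 0" using c by (simp add: mult_le_0_iff)
  qed
  then show inv: "invertible M" unfolding invertible_left_inverse matrix_left_invertible_ker .
  show "mnorm (matrix_inv M) \<le> 1 / c" unfolding mnorm_def
  proof (rule onorm_le)
    fix w
    have "M *v (matrix_inv M *v w) = w" by (simp add: matrix_vector_mul_assoc inv_props[OF inv])
    then have "c * norm (matrix_inv M *v w) \<le> norm w" using low[of "matrix_inv M *v w"] by simp
    then show "norm (matrix_inv M *v w) \<le> 1 / c * norm w" using c by (simp add: field_simps)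
  qed
qed


theorem lemma4p3:
  fixes f :: "real^'n \<Rightarrow> real" and gf :: "real^'n \<Rightarrow> real^'n"
    and Hf :: "real^'n \<Rightarrow> real^'n^'n"
    and r :: "real^'n \<Rightarrow> ereal"
    and G :: "'s \<Rightarrow> real^'n \<Rightarrow> real^'n" and H :: "'t \<Rightarrow> real^'n \<Rightarrow> real^'n^'n"
    and L lamM lamm C :: real and xs :: "real^'n" and \<Lambda> :: "real^'n^'n"
  assumes r_convex: "ext_convex r" and r_lsc: "lsc r" and r_proper: "proper_fun r"
    and grad: "\<And>x. (f has_derivative (\<lambda>h. gf x \<bullet> h)) (at x)"
    and hess: "\<And>x. (gf has_derivative (\<lambda>h. Hf x *v h)) (at x)"
    and hess_cont: "continuous_on UNIV Hf"
    and lip: "L-lipschitz_on UNIV gf"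
    and H_sym: "\<And>t x. sym_mat (H t x)"
    and Lam_pd: "pos_def \<Lambda>"
    and Lam_up: "loewner_le \<Lambda> (lamM *\<^sub>R mat 1)"
    and Lam_low: "loewner_le (lamm *\<^sub>R mat 1) \<Lambda>"
    and lm_pos: "lamm > 0"
    and C_pos: "C > 0"
    and reg: "\<And>M. M \<in> Mset \<Lambda> r xs (gf xs) (Hf xs) \<Longrightarrow>
                 invertible M \<and> mnorm (matrix_inv M) \<le> C"
  shows "\<forall>\<beta>c \<gamma>c. 0 < \<beta>c \<and> \<beta>c < 1 \<and> 0 < \<gamma>c \<and> \<gamma>c < \<beta>c / C \<longrightarrow>
           (\<exists>\<epsilon>c > 0. \<forall>s t x. dist x xs < \<epsilon>c \<and> norm (gf x - G s x) \<le> \<epsilon>c \<and>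
               mnorm (Hf x - H t x) \<le> 0.5 * lamm * \<gamma>c \<longrightarrow>
               (\<forall>M \<in> Mset \<Lambda> r x (G s x) (H t x).
                   invertible M \<and> mnorm (matrix_inv M) \<le> C / (1 - \<beta>c)))"
proof (intro allI impI)
  fix \<beta>c \<gamma>c :: real assume hyp: "0 < \<beta>c \<and> \<beta>c < 1 \<and> 0 < \<gamma>c \<and> \<gamma>c < \<beta>c / C"
  then have b0: "0 < \<beta>c" and b1: "\<beta>c < 1" and g0: "0 < \<gamma>c" and gC: "\<gamma>c < \<beta>c / C" by auto
  have sym: "transpose \<Lambda> = \<Lambda>" using Lam_pd unfolding pos_def_def sym_mat_def by simp
  have low: "lamm * (v \<bullet> v) \<le> v \<bullet> (\<Lambda> *v v)" for v
  proof -
    have "0 \<le> v \<bullet> ((\<Lambda> - lamm *\<^sub>R mat 1) *v v)" using Lam_low unfolding loewner_le_def by blast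
    also have "(\<Lambda> - lamm *\<^sub>R mat 1) *v v = \<Lambda> *v v - lamm *\<^sub>R v"
      by (simp add: matrix_vector_mult_diff_rdistrib scaleR_matrix_vector_assoc[symmetric])
    finally show ?thesis by (simp add: inner_diff_right)
  qed
  have psd: "0 \<le> v \<bullet> (\<Lambda> *v v)" for v using low[of v] lm_pos
    by (meson inner_ge_zero mult_nonneg_nonneg less_imp_le order_trans)
  have "\<forall>x. \<Lambda> *v x = 0 \<longrightarrow> x = 0"
  proof (intro allI impI)
    fix x assume "\<Lambda> *v x = 0"
    then have "lamm * (x \<bullet> x) \<le> 0" using low[of x] by simp
    then have "x \<bullet> x \<le> 0" using lm_pos by (simp add: mult_le_0_iff)
    then show "x = 0" by (metis inner_ge_zero antisym inner_eq_zero_iff)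
  qed
  then have Linv: "invertible \<Lambda>" unfolding invertible_left_inverse matrix_left_invertible_ker .
  define Li where "Li = matrix_inv \<Lambda>"
  have LLi: "\<Lambda> ** Li = mat 1" unfolding Li_def by (rule inv_props[OF Linv])
  have LLiv: "\<Lambda> *v (Li *v w) = w" for w by (simp add: matrix_vector_mul_assoc LLi)
  define F where "F = prox \<Lambda> r"
  have fne: "(F a - F b) \<bullet> (\<Lambda> *v (F a - F b)) \<le> (F a - F b) \<bullet> (\<Lambda> *v (a - b))" for a b
    unfolding F_def by (rule prox_FNE[OF r_convex r_proper r_lsc sym low lm_pos])
  have jS: "jacobian F (at y) \<in> Sset \<Lambda>" if "F differentiable (at y)" for y
    using fne that by (rule jac_in_S)
  have Scl: "closed (Sset \<Lambda>)" by (rule S_closed)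
  have Sbd: "bounded (Sset \<Lambda>)" by (rule S_bounded[OF low lm_pos])
  have Scv: "convex (Sset \<Lambda>)" by (rule S_convex[OF sym psd])
  have E1: "lamm * norm (D *v (Li *v w)) \<le> norm w" if "D \<in> Sset \<Lambda>" for D w
    using S_bound0[OF that low lm_pos, of "Li *v w"] LLiv by simp
  define cN where "cN = real CARD('n) * real CARD('n)"
  have cN0: "0 < cN" unfolding cN_def by simp
  have mvb: "norm (A *v v) \<le> cN * norm A * norm v" for A :: "real^'n^'n" and v
    unfolding cN_def by (rule mv_bound)
  define H0 where "H0 = Hf xs"
  define u0 where "u0 = xs - Li *v gf xs"
  define K1 where "K1 = cN * norm (Li ** H0)"
  have K10: "0 \<le> K1" unfolding K1_def using cN0 by simp
  define \<eta> where "\<eta> = \<beta>c / C - \<gamma>c / 2"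
  have \<eta>0: "0 < \<eta>" unfolding \<eta>_def using gC g0 by linarith
  define e' where "e' = \<eta> / (2 * cN * (1 + K1))"
  have e'0: "0 < e'" unfolding e'_def using \<eta>0 cN0 K10 by simp
  have den: "0 < 2 * cN * (1 + K1)" using cN0 K10 by simp
  have e'eq: "cN * e' * (1 + K1) = \<eta> / 2" unfolding e'_def using den by (simp add: field_simps)
  have ex\<delta>: "\<exists>\<delta>>0. \<forall>u. dist u u0 < \<delta> \<longrightarrow>
            (\<forall>D\<in>clarke_jac F u. \<exists>D'\<in>closure (clarke_jac F u0). norm (D - D') \<le> e')"
    using clarke_usc[OF Scl Sbd Scv jS e'0, of u0] by simp
  then obtain \<delta> where \<delta>0: "0 < \<delta>" and \<delta>1: "\<forall>u. dist u u0 < \<delta> \<longrightarrow>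
            (\<forall>D\<in>clarke_jac F u. \<exists>D'\<in>closure (clarke_jac F u0). norm (D - D') \<le> e')"
    by (elim exE conjE)
  define Gd where "Gd = {D. \<forall>v. norm v \<le> C * norm ((mat 1 - D + D ** Li ** H0) *v v)}"
  have Gdcl: "closed Gd"
  proof -
    have "Gd = (\<Inter>v. {D. norm v - C * norm (v - D *v v + D *v (Li *v (H0 *v v))) \<le> 0})"
      unfolding Gd_def Mmul by auto
    moreover have "closed {D::real^'n^'n. norm v - C * norm (v - D *v v + D *v (Li *v (H0 *v v))) \<le> 0}" for v
    proof -
      have c1: "continuous_on UNIV (\<lambda>D::real^'n^'n. D *v v)" by (rule cont_mv_left)
      have c2: "continuous_on UNIV (\<lambda>D::real^'n^'n. D *v (Li *v (H0 *v v)))" by (rule cont_mv_left)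
      have "continuous_on UNIV (\<lambda>D::real^'n^'n. norm v - C * norm (v - D *v v + D *v (Li *v (H0 *v v))))"
        by (intro continuous_intros c1 c2)
      then show ?thesis by (intro closed_Collect_le) (auto intro: continuous_intros)
    qed
    ultimately show ?thesis by (auto intro: closed_INT)
  qed
  have clGd: "clarke_jac F u0 \<subseteq> Gd"
  proof
    fix D assume D: "D \<in> clarke_jac F u0"
    have "mat 1 - D + D ** matrix_inv \<Lambda> ** Hf xs \<in> Mset \<Lambda> r xs (gf xs) (Hf xs)"
      unfolding Mset_def using D unfolding F_def u0_def Li_def by blast
    then have "invertible (mat 1 - D + D ** Li ** H0) \<and> mnorm (matrix_inv (mat 1 - D + D ** Li ** H0)) \<le> C"
      unfolding Li_def H0_def by (rule reg)
    then show "D \<in> Gd" unfolding Gd_def using lower_inv by blast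
  qed
  have closGd: "closure (clarke_jac F u0) \<subseteq> Gd" by (rule closure_minimal[OF clGd Gdcl])
  have "continuous_on UNIV Hf" by (rule hess_cont)
  then obtain \<rho>1 where \<rho>10: "0 < \<rho>1" and \<rho>1: "\<And>x. dist x xs < \<rho>1 \<Longrightarrow> dist (Hf x) (Hf xs) < lamm * \<eta> / (2 * cN)"
    unfolding continuous_on_iff using lm_pos \<eta>0 cN0
    by (metis UNIV_I divide_pos_pos mult_pos_pos zero_less_numeral)
  have "continuous_on UNIV gf"
    by (intro continuous_at_imp_continuous_on ballI has_derivative_continuous[OF hess])
  define nLi where "nLi = cN * norm Li"
  have nLi0: "0 \<le> nLi" unfolding nLi_def using cN0 by simp
  define \<delta>' where "\<delta>' = \<delta> / (3 * (nLi + 1))"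
  have \<delta>'0: "0 < \<delta>'" unfolding \<delta>'_def using \<delta>0 nLi0 by simp
  obtain \<rho>2 where \<rho>20: "0 < \<rho>2" and \<rho>2: "\<And>x. dist x xs < \<rho>2 \<Longrightarrow> dist (gf x) (gf xs) < \<delta>'"
    using \<open>continuous_on UNIV gf\<close> \<delta>'0 unfolding continuous_on_iff by (metis UNIV_I)
  define \<epsilon>c where "\<epsilon>c = min (min \<rho>1 \<rho>2) \<delta>'"
  have \<epsilon>c0: "0 < \<epsilon>c" unfolding \<epsilon>c_def using \<rho>10 \<rho>20 \<delta>'0 by simp
  show "\<exists>\<epsilon>c>0. \<forall>s t x. dist x xs < \<epsilon>c \<and> norm (gf x - G s x) \<le> \<epsilon>c \<and>
               mnorm (Hf x - H t x) \<le> 0.5 * lamm * \<gamma>c \<longrightarrow>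
               (\<forall>M \<in> Mset \<Lambda> r x (G s x) (H t x).
                   invertible M \<and> mnorm (matrix_inv M) \<le> C / (1 - \<beta>c))"
  proof (intro exI[of _ \<epsilon>c] conjI allI impI ballI \<epsilon>c0)
    fix s t x M
    assume asm: "dist x xs < \<epsilon>c \<and> norm (gf x - G s x) \<le> \<epsilon>c \<and> mnorm (Hf x - H t x) \<le> 0.5 * lamm * \<gamma>c"
      and M: "M \<in> Mset \<Lambda> r x (G s x) (H t x)"
    define u where "u = x - Li *v G s x"
    obtain D where MD: "M = mat 1 - D + D ** Li ** H t x" and D: "D \<in> clarke_jac F u"
      using M unfolding Mset_def u_def Li_def F_def by blast
    have dx: "dist x xs < \<epsilon>c" and dG: "norm (gf x - G s x) \<le> \<epsilon>c"
      and dH: "mnorm (Hf x - H t x) \<le> 0.5 * lamm * \<gamma>c" using asm by auto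
    have Li_b: "norm (Li *v w) \<le> nLi * norm w" for w unfolding nLi_def using mvb by simp
    have "dist u u0 < \<delta>"
    proof -
      have "u - u0 = (x - xs) - Li *v ((G s x - gf x) + (gf x - gf xs))"
        unfolding u_def u0_def by (simp add: matrix_vector_mult_diff_distrib algebra_simps)
      then have a1: "norm (u - u0) \<le> norm (x - xs) + norm (Li *v ((G s x - gf x) + (gf x - gf xs)))"
        by (simp add: norm_triangle_ineq4)
      have a2: "norm (Li *v ((G s x - gf x) + (gf x - gf xs))) \<le> nLi * norm ((G s x - gf x) + (gf x - gf xs))"
        by (rule Li_b)
      have a3: "nLi * norm ((G s x - gf x) + (gf x - gf xs)) \<le> nLi * (norm (G s x - gf x) + norm (gf x - gf xs))"
        by (rule mult_left_mono[OF norm_triangle_ineq nLi0])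
      have i1: "norm (u - u0) \<le> norm (x - xs) + nLi * (norm (G s x - gf x) + norm (gf x - gf xs))"
        using a1 a2 a3 by linarith
      have "dist x xs < \<rho>2" using dx unfolding \<epsilon>c_def by simp
      then have "norm (gf x - gf xs) < \<delta>'" using \<rho>2 by (simp add: dist_norm)
      moreover have "norm (G s x - gf x) \<le> \<delta>'" using dG unfolding \<epsilon>c_def by (simp add: norm_minus_commute)
      ultimately have "nLi * (norm (G s x - gf x) + norm (gf x - gf xs)) \<le> nLi * (2 * \<delta>')"
        using nLi0 by (intro mult_left_mono) auto
      also have "\<dots> \<le> (nLi + 1) * (2 * \<delta>')" using \<delta>'0 by (intro mult_right_mono) auto
      also have "\<dots> = 2 * \<delta> / 3" unfolding \<delta>'_def using nLi0 by (simp add: field_simps)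
      finally have i2: "nLi * (norm (G s x - gf x) + norm (gf x - gf xs)) \<le> 2 * \<delta> / 3" .
      have "\<delta>' \<le> \<delta> / 3" unfolding \<delta>'_def using \<delta>0 nLi0 by (simp add: field_simps)
      then have "norm (x - xs) < \<delta> / 3" using dx unfolding \<epsilon>c_def by (simp add: dist_norm)
      with i1 i2 show ?thesis by (simp add: dist_norm)
    qed
    then have near: "\<exists>D'\<in>closure (clarke_jac F u0). norm (D - D') \<le> e'" using \<delta>1 D by blast
    then obtain D' where D'cl: "D' \<in> closure (clarke_jac F u0)" and DD': "norm (D - D') \<le> e'" by blast
    have D'G: "D' \<in> Gd" using D'cl closGd by blast
    have DS: "D \<in> Sset \<Lambda>" using D clarke_subset_S[OF Scl Scv jS, of u] by blast
    have Hclose: "norm (Hf x - H0) < lamm * \<eta> / (2 * cN)"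
    proof -
      have "dist x xs < \<rho>1" using dx unfolding \<epsilon>c_def by simp
      then show ?thesis using \<rho>1 unfolding H0_def by (simp add: dist_norm)
    qed
    have key: "(1 - \<beta>c) / C * norm v \<le> norm (M *v v)" for v
    proof -
      define Ht where "Ht = H t x"
      define Hx where "Hx = Hf x"
      define a where "a = Li *v (H0 *v v)"
      define b where "b = Li *v (Hx *v v)"
      define c where "c = Li *v (Ht *v v)"
      have Mv: "M *v v = v - D *v v + D *v c" unfolding MD Mmul c_def Ht_def ..
      define M'v where "M'v = v - D' *v v + D' *v a"
      have lowG: "norm v \<le> C * norm M'v" using D'G unfolding Gd_def Mmul M'v_def a_def by blast
      have diff: "M *v v - M'v = (D' - D) *v v + (D - D') *v a + D *v (Li *v ((Hx - H0) *v v))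
          + D *v (Li *v ((Ht - Hx) *v v))"
        unfolding Mv M'v_def a_def b_def c_def
        by (simp add: matrix_vector_mult_diff_rdistrib matrix_vector_mult_diff_distrib algebra_simps)
      have n1: "norm ((D' - D) *v v) \<le> cN * e' * norm v"
      proof -
        have "norm ((D' - D) *v v) \<le> cN * norm (D' - D) * norm v" by (rule mvb)
        also have "\<dots> \<le> cN * e' * norm v" using DD' cN0 by (simp add: norm_minus_commute mult_right_mono)
        finally show ?thesis .
      qed
      have na: "norm a \<le> K1 * norm v" unfolding a_def K1_def
        using mvb[of "Li ** H0" v] by (simp add: matrix_vector_mul_assoc)
      have n2: "norm ((D - D') *v a) \<le> cN * e' * (K1 * norm v)"
      proof -
        have "norm ((D - D') *v a) \<le> cN * norm (D - D') * norm a" by (rule mvb)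
        also have "\<dots> \<le> cN * e' * (K1 * norm v)" using DD' cN0 na e'0
          by (intro mult_mono) (auto intro: mult_left_mono)
        finally show ?thesis .
      qed
      have n3: "norm (D *v (Li *v ((Hx - H0) *v v))) \<le> \<eta> / 2 * norm v"
      proof -
        have "lamm * norm (D *v (Li *v ((Hx - H0) *v v))) \<le> norm ((Hx - H0) *v v)" by (rule E1[OF DS])
        also have "\<dots> \<le> cN * norm (Hx - H0) * norm v" by (rule mvb)
        also have "\<dots> \<le> cN * (lamm * \<eta> / (2 * cN)) * norm v" using Hclose cN0 unfolding Hx_def
          by (intro mult_right_mono mult_left_mono) auto
        also have "\<dots> = lamm * (\<eta> / 2 * norm v)" using cN0 by (simp add: field_simps)
        finally show ?thesis using lm_pos by simp
      qed
      have n4: "norm (D *v (Li *v ((Ht - Hx) *v v))) \<le> \<gamma>c / 2 * norm v"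
      proof -
        have "lamm * norm (D *v (Li *v ((Ht - Hx) *v v))) \<le> norm ((Ht - Hx) *v v)" by (rule E1[OF DS])
        also have "norm ((Ht - Hx) *v v) = norm ((Hx - Ht) *v v)"
          by (simp add: matrix_vector_mult_diff_rdistrib norm_minus_commute)
        also have "\<dots> \<le> onorm ((*v) (Hx - Ht)) * norm v" by (rule onorm[OF matrix_vector_mul_bounded_linear])
        also have "\<dots> \<le> (0.5 * lamm * \<gamma>c) * norm v" using dH unfolding mnorm_def Hx_def Ht_def
          by (intro mult_right_mono) auto
        also have "\<dots> = lamm * (\<gamma>c / 2 * norm v)" by simp
        finally show ?thesis using lm_pos by simp
      qed
      have "norm (M *v v - M'v) \<le> norm ((D' - D) *v v) + norm ((D - D') *v a)
          + norm (D *v (Li *v ((Hx - H0) *v v))) + norm (D *v (Li *v ((Ht - Hx) *v v)))"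
        unfolding diff by (meson norm_triangle_le add_mono order_refl norm_triangle_ineq)
      also have "\<dots> \<le> cN * e' * norm v + cN * e' * (K1 * norm v) + \<eta> / 2 * norm v + \<gamma>c / 2 * norm v"
        using n1 n2 n3 n4 by linarith
      also have "\<dots> = (cN * e' * (1 + K1) + \<eta> / 2 + \<gamma>c / 2) * norm v" by (simp add: algebra_simps)
      also have "\<dots> = \<beta>c / C * norm v" unfolding e'eq \<eta>_def by simp
      finally have dM: "norm (M *v v - M'v) \<le> \<beta>c / C * norm v" .
      have "norm M'v \<le> norm (M *v v) + norm (M *v v - M'v)" by (metis norm_triangle_sub add.commute norm_minus_commute)
      then have "norm M'v \<le> norm (M *v v) + \<beta>c / C * norm v" using dM by linarith
      then have "C * norm M'v \<le> C * (norm (M *v v) + \<beta>c / C * norm v)"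
        using C_pos by (intro mult_left_mono) auto
      then have "C * norm M'v \<le> C * norm (M *v v) + C * (\<beta>c / C * norm v)"
        by (simp add: distrib_left)
      then have "norm v \<le> C * norm (M *v v) + \<beta>c * norm v" using lowG C_pos by simp
      then have "(1 - \<beta>c) * norm v \<le> C * norm (M *v v)" by (simp add: algebra_simps)
      then show ?thesis using C_pos by (simp add: field_simps)
    qed
  
    have c0: "0 < (1 - \<beta>c) / C" using b1 C_pos by simp
    show "invertible M" by (rule inv_from_lower(1)[OF c0 key])
    have "mnorm (matrix_inv M) \<le> 1 / ((1 - \<beta>c) / C)" by (rule inv_from_lower(2)[OF c0 key])
    then show "mnorm (matrix_inv M) \<le> C / (1 - \<beta>c)" by simp
  qed
qed

end
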